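(* Let $N=2^{\mathsf n}$ and let $\rho_*$ be any finite-dimensional (possibly reducible) representation of the Lie algebra $\mathfrak{su}(N)$ (complexified, i.e. $\mathfrak{sl}(N;\mathbb C)$, the space of traceless $N\times N$ complex matrices), induced from a representation $\rho$ of $\mathrm{SU}(N)$. Then for non-identity Hermitian $\mathsf n$-qubit Pauli operators $P$ (tensor products of $\mathbf 1_2,\sigma^x,\sigma^y,\sigma^z$ other than the identity), the eigenvalue spectrum of $\rho_*(P)$ is independent of $P$. In particular, $\rho_*(P)$ and $-\rho_*(P)$ have the same spectrum.
   Context: $\rho_*$ is the derivative of the group homomorphism $\rho$, so that $\rho(e^{X})=e^{\rho_*(X)}$ for $X$ in the Lie algebra, extended complex-linearly. *)

theory Defs
  imports Complex_Main "Jordan_Normal_Form.Char_Poly" "Jordan_Normal_Form.Determinant"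
begin

definition ctrans :: "complex mat \<Rightarrow> complex mat" where
  "ctrans A = mat (dim_col A) (dim_row A) (\<lambda>(i,j). cnj (A $$ (j,i)))"

definition mtrace :: "complex mat \<Rightarrow> complex" where
  "mtrace A = (\<Sum>i<dim_row A. A $$ (i,i))"

definition mexp :: "complex mat \<Rightarrow> complex mat" where
  "mexp A = mat (dim_row A) (dim_col A)
     (\<lambda>(i,j). \<Sum>k. (A ^\<^sub>m k) $$ (i,j) / of_nat (fact k))"

definition SU :: "nat \<Rightarrow> complex mat set" where
  "SU N = {U. U \<in> carrier_mat N N \<and> ctrans U * U = 1\<^sub>m N \<and> det U = 1}"

definition su :: "nat \<Rightarrow> complex mat set" where
  "su N = {X. X \<in> carrier_mat N N \<and> ctrans X = - X \<and> mtrace X = 0}"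

definition sl :: "nat \<Rightarrow> complex mat set" where
  "sl N = {X. X \<in> carrier_mat N N \<and> mtrace X = 0}"

definition commutator :: "complex mat \<Rightarrow> complex mat \<Rightarrow> complex mat" where
  "commutator X Y = X * Y - Y * X"

text \<open>Single-qubit Pauli matrices: 0 = identity, 1 = sigma x, 2 = sigma y, 3 = sigma z;
  entries indexed by a b \<in> {0,1}.\<close>
definition sigma :: "nat \<Rightarrow> nat \<Rightarrow> nat \<Rightarrow> complex" where
  "sigma s a b =
    (if s = 0 then (if a = b then 1 else 0)
     else if s = 1 then (if a \<noteq> b then 1 else 0)
     else if s = 2 then (if a = 0 \<and> b = 1 then - \<i> else if a = 1 \<and> b = 0 then \<i> else 0)
     else (if a = b then (if a = 0 then 1 else -1) else 0))"

text \<open>The n-qubit Pauli string sigma_{s 0} \<otimes> ... \<otimes> sigma_{s (n-1)}, as a 2^n x 2^n matrix: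
  its (i,j) entry is the product over qubits k of the single-qubit entries at the k-th bits
  of i and j.\<close>
definition pauli_string :: "nat \<Rightarrow> (nat \<Rightarrow> nat) \<Rightarrow> complex mat" where
  "pauli_string n s = mat (2^n) (2^n)
     (\<lambda>(i,j). \<Prod>k<n. sigma (s k) ((i div 2^k) mod 2) ((j div 2^k) mod 2))"

definition nonid_pauli_label :: "nat \<Rightarrow> (nat \<Rightarrow> nat) \<Rightarrow> bool" where
  "nonid_pauli_label n s \<longleftrightarrow> (\<forall>k<n. s k \<le> 3) \<and> (\<exists>k<n. s k \<noteq> 0)"

end

theory Submission
  imports Defs
begin


lemma powser_line_zero:
  fixes a :: "nat \<Rightarrow> complex"
  assumes summ: "\<And>z. summable (\<lambda>k. a k * z ^ k)"
    and zero: "\<And>t::real. (\<Sum>k. a k * (of_real t * \<i>) ^ k) = 0"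
  shows "a 1 = 0"
proof -
  have a0: "a 0 = 0" using zero[of 0] powser_zero[of a] by simp
  define q where "q z = (\<Sum>k. a (Suc k) * z ^ k)" for z
  have summq: "summable (\<lambda>k. a (Suc k) * z ^ k)" for z
  proof (cases "z = 0")
    case True then show ?thesis by simp
  next
    case False
    have "summable (\<lambda>k. a (Suc k) * z ^ Suc k)"
      using summ[of z] summable_Suc_iff[of "\<lambda>k. a k * z ^ k"] by simp
    then have "summable (\<lambda>k. (a (Suc k) * z ^ Suc k) / z)" by (rule summable_divide)
    moreover have "(\<lambda>k. (a (Suc k) * z ^ Suc k) / z) = (\<lambda>k. a (Suc k) * z ^ k)"
      using False by (auto simp: field_simps)
    ultimately show ?thesis by simp
  qed
  have split: "(\<Sum>k. a k * z ^ k) = a 0 + z * q z" for z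
  proof -
    have "(\<Sum>k. a k * z ^ k) = (\<Sum>k. a (Suc k) * z ^ Suc k) + a 0 * z ^ 0"
      using suminf_split_head[OF summ[of z]] by (simp add: suminf_split_head)
    also have "(\<Sum>k. a (Suc k) * z ^ Suc k) = (\<Sum>k. z * (a (Suc k) * z ^ k))"
      by (simp add: algebra_simps)
    also have "\<dots> = z * q z" unfolding q_def using summq[of z] by (rule suminf_mult)
    finally show ?thesis by simp
  qed
  have qz: "q (of_real t * \<i>) = 0" if "t \<noteq> 0" for t :: real
    using zero[of t] split[of "of_real t * \<i>"] a0 that by simp
  have cont: "isCont q 0" unfolding q_def by (rule isCont_powser_converges_everywhere[OF summq])
  have lim1: "((\<lambda>t::real. q (of_real t * \<i>)) \<longlongrightarrow> q 0) (at 0)"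
  proof -
    have "isCont (\<lambda>t::real. of_real t * \<i>) 0" by (intro continuous_intros)
    moreover have "isCont q (of_real 0 * \<i>)" using cont by simp
    ultimately have "isCont (\<lambda>t::real. q (of_real t * \<i>)) 0"
      by (rule isCont_o2)
    then show ?thesis by (simp add: isCont_def)
  qed
  have lim2: "((\<lambda>t::real. q (of_real t * \<i>)) \<longlongrightarrow> 0) (at 0)"
  proof (rule tendsto_eventually)
    show "\<forall>\<^sub>F t in at (0::real). q (of_real t * \<i>) = 0"
      by (auto simp: eventually_at_filter qz)
  qed
  have "q 0 = 0" using tendsto_unique[OF _ lim1 lim2] by simp
  moreover have "q 0 = a 1" unfolding q_def using powser_zero[of "\<lambda>k. a (Suc k)"] by simp
  ultimately show ?thesis by simp
qed

definition mnorm :: "nat \<Rightarrow> complex mat \<Rightarrow> real" where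
  "mnorm d A = (\<Sum>p<d. \<Sum>q<d. norm (A $$ (p,q)))"

lemma pow_entry_bound:
  assumes A: "A \<in> carrier_mat d d" and pq: "p < d" "q < d"
  shows "norm ((A ^\<^sub>m k) $$ (p,q)) \<le> mnorm d A ^ k"
  using pq
proof (induction k arbitrary: p q)
  case 0
  then show ?case using A by (auto simp: one_mat_def)
next
  case (Suc k)
  have pk: "A ^\<^sub>m k \<in> carrier_mat d d" using A by simp
  have "(A ^\<^sub>m Suc k) $$ (p,q) = (\<Sum>r<d. (A ^\<^sub>m k) $$ (p,r) * A $$ (r,q))"
    using Suc.prems A pk by (auto simp: scalar_prod_def lessThan_atLeast0 intro!: sum.cong)
  then have "norm ((A ^\<^sub>m Suc k) $$ (p,q)) \<le> (\<Sum>r<d. norm ((A ^\<^sub>m k) $$ (p,r)) * norm (A $$ (r,q)))"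
    by (simp add: norm_mult[symmetric] norm_sum)
  also have "\<dots> \<le> (\<Sum>r<d. mnorm d A ^ k * norm (A $$ (r,q)))"
    using Suc by (intro sum_mono mult_right_mono) auto
  also have "\<dots> = mnorm d A ^ k * (\<Sum>r<d. norm (A $$ (r,q)))" by (simp add: sum_distrib_left)
  also have "(\<Sum>r<d. norm (A $$ (r,q))) \<le> mnorm d A"
    unfolding mnorm_def using Suc.prems
    by (intro sum_mono) (rule member_le_sum[of q "{..<d}" "\<lambda>q. norm (A $$ (_,q))"], auto)
  then have "mnorm d A ^ k * (\<Sum>r<d. norm (A $$ (r,q))) \<le> mnorm d A ^ k * mnorm d A"
    by (intro mult_left_mono) (auto simp: mnorm_def intro!: sum_nonneg zero_le_power)
  finally show ?case by (simp add: mult.commute)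
qed

lemma smult_smult_mat: "a \<cdot>\<^sub>m (b \<cdot>\<^sub>m (A :: 'a :: semigroup_mult mat)) = (a * b) \<cdot>\<^sub>m A"
  by (rule eq_matI) (auto simp: mult.assoc)

lemma pow_smult_mat:
  fixes A :: "complex mat"
  assumes A: "A \<in> carrier_mat d d"
  shows "(c \<cdot>\<^sub>m A) ^\<^sub>m k = (c ^ k) \<cdot>\<^sub>m (A ^\<^sub>m k)"
proof (induction k)
  case 0 then show ?case using A by auto
next
  case (Suc k)
  have "(c \<cdot>\<^sub>m A) ^\<^sub>m Suc k = ((c ^ k) \<cdot>\<^sub>m (A ^\<^sub>m k)) * (c \<cdot>\<^sub>m A)" using Suc by simp
  also have "\<dots> = (c ^ k * c) \<cdot>\<^sub>m (A ^\<^sub>m k * A)"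
  proof -
    have Ak: "A ^\<^sub>m k \<in> carrier_mat d d" using A by simp
    have "((c ^ k) \<cdot>\<^sub>m (A ^\<^sub>m k)) * (c \<cdot>\<^sub>m A) = (c ^ k) \<cdot>\<^sub>m ((A ^\<^sub>m k) * (c \<cdot>\<^sub>m A))"
      by (rule mult_smult_assoc_mat[OF Ak, of _ d]) (use A in simp)
    also have "(A ^\<^sub>m k) * (c \<cdot>\<^sub>m A) = c \<cdot>\<^sub>m ((A ^\<^sub>m k) * A)"
      using Ak A by (rule mult_smult_distrib)
    finally show ?thesis by (simp add: smult_smult_mat)
  qed
  finally show ?case by (simp add: mult.commute)
qed

lemma mexp_sums:
  assumes A: "A \<in> carrier_mat d d" and pq: "p < d" "q < d"
  shows "(\<lambda>k. z ^ k * (A ^\<^sub>m k) $$ (p,q) / fact k) sums (mexp (z \<cdot>\<^sub>m A)) $$ (p,q)"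
proof -
  have summ: "summable (\<lambda>k. z ^ k * (A ^\<^sub>m k) $$ (p,q) / fact k)"
  proof (rule summable_comparison_test)
    show "\<exists>N. \<forall>k\<ge>N. norm (z ^ k * (A ^\<^sub>m k) $$ (p,q) / fact k) \<le> inverse (fact k) * (norm z * mnorm d A) ^ k"
    proof (intro exI allI impI)
      fix k :: nat
      have "norm (z ^ k * (A ^\<^sub>m k) $$ (p,q) / fact k) = norm z ^ k * norm ((A ^\<^sub>m k) $$ (p,q)) / fact k"
        by (simp add: norm_mult norm_divide norm_power)
      also have "\<dots> \<le> norm z ^ k * mnorm d A ^ k / fact k"
        using pow_entry_bound[OF A pq, of k]
        by (intro divide_right_mono mult_left_mono) auto
      finally show "norm (z ^ k * (A ^\<^sub>m k) $$ (p,q) / fact k) \<le> inverse (fact k) * (norm z * mnorm d A) ^ k"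
        by (simp add: power_mult_distrib divide_inverse mult.commute)
    qed
    show "summable (\<lambda>k. inverse (fact k) * (norm z * mnorm d A) ^ k)" by (rule summable_exp)
  qed
  have "(mexp (z \<cdot>\<^sub>m A)) $$ (p,q) = (\<Sum>k. ((z \<cdot>\<^sub>m A) ^\<^sub>m k) $$ (p,q) / of_nat (fact k))"
    using A pq by (simp add: mexp_def)
  also have "\<dots> = (\<Sum>k. z ^ k * (A ^\<^sub>m k) $$ (p,q) / fact k)"
    using A pq by (simp add: pow_smult_mat)
  finally show ?thesis using summ by (simp add: summable_sums)
qed

lemma triple_entry:
  assumes "V \<in> carrier_mat d d" "X \<in> carrier_mat d d" "W \<in> carrier_mat d d" "i < d" "j < d"
  shows "(V * X * W) $$ (i,j) = (\<Sum>p<d. \<Sum>q<d. V $$ (i,p) * X $$ (p,q) * W $$ (q,j))"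
  using assms by (simp add: scalar_prod_def lessThan_atLeast0 sum_distrib_left sum_distrib_right mult.assoc)

lemma exp_similar:
  fixes A B V W :: "complex mat"
  assumes A: "A \<in> carrier_mat d d" and B: "B \<in> carrier_mat d d"
    and V: "V \<in> carrier_mat d d" and W: "W \<in> carrier_mat d d"
    and VW: "V * W = 1\<^sub>m d"
    and eq: "\<And>t::real. V * mexp ((of_real t * \<i>) \<cdot>\<^sub>m A) * W = mexp ((of_real t * \<i>) \<cdot>\<^sub>m B)"
  shows "V * A * W = B"
proof (rule eq_matI)
  show "dim_row (V * A * W) = dim_row B" "dim_col (V * A * W) = dim_col B" using V W B by auto
  fix i j assume "i < dim_row B" "j < dim_col B"
  then have ij: "i < d" "j < d" using B by auto
  define a where "a k = ((V * (A ^\<^sub>m k) * W) $$ (i,j) - (B ^\<^sub>m k) $$ (i,j)) / fact k" for k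
  have sA: "(\<lambda>k. z ^ k * (V * (A ^\<^sub>m k) * W) $$ (i,j) / fact k) sums (V * mexp (z \<cdot>\<^sub>m A) * W) $$ (i,j)" for z
  proof -
    have mc: "mexp (z \<cdot>\<^sub>m A) \<in> carrier_mat d d" using A by (simp add: mexp_def)
    have "(\<lambda>k. \<Sum>p<d. \<Sum>q<d. V $$ (i,p) * (z ^ k * (A ^\<^sub>m k) $$ (p,q) / fact k) * W $$ (q,j))
       sums (\<Sum>p<d. \<Sum>q<d. V $$ (i,p) * (mexp (z \<cdot>\<^sub>m A)) $$ (p,q) * W $$ (q,j))"
      by (intro sums_sum sums_mult sums_mult2 mexp_sums[OF A]) auto
    moreover have "(\<Sum>p<d. \<Sum>q<d. V $$ (i,p) * (z ^ k * (A ^\<^sub>m k) $$ (p,q) / fact k) * W $$ (q,j))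
       = z ^ k * (V * (A ^\<^sub>m k) * W) $$ (i,j) / fact k" for k
      by (subst triple_entry[OF V _ W ij]) (auto simp: A sum_distrib_left sum_divide_distrib intro!: sum.cong)
    ultimately show ?thesis using triple_entry[OF V mc W ij] by simp
  qed
  have sB: "(\<lambda>k. z ^ k * (B ^\<^sub>m k) $$ (i,j) / fact k) sums (mexp (z \<cdot>\<^sub>m B)) $$ (i,j)" for z
    by (rule mexp_sums[OF B ij])
  have sa: "(\<lambda>k. a k * z ^ k) sums ((V * mexp (z \<cdot>\<^sub>m A) * W) $$ (i,j) - (mexp (z \<cdot>\<^sub>m B)) $$ (i,j))" for z
  proof -
    have "(\<lambda>k. z ^ k * (V * (A ^\<^sub>m k) * W) $$ (i,j) / fact k - z ^ k * (B ^\<^sub>m k) $$ (i,j) / fact k)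
      sums ((V * mexp (z \<cdot>\<^sub>m A) * W) $$ (i,j) - (mexp (z \<cdot>\<^sub>m B)) $$ (i,j))"
      by (rule sums_diff[OF sA sB])
    moreover have "(\<lambda>k. z ^ k * (V * (A ^\<^sub>m k) * W) $$ (i,j) / fact k - z ^ k * (B ^\<^sub>m k) $$ (i,j) / fact k)
       = (\<lambda>k. a k * z ^ k)" by (auto simp: a_def field_simps)
    ultimately show ?thesis by simp
  qed
  have "a 1 = 0"
  proof (rule powser_line_zero)
    show "summable (\<lambda>k. a k * z ^ k)" for z using sa[of z] by (rule sums_summable)
    show "(\<Sum>k. a k * (of_real t * \<i>) ^ k) = 0" for t :: real
      using sums_unique[OF sa[of "of_real t * \<i>"]] eq[of t] by simp
  qed
  then show "(V * A * W) $$ (i,j) = B $$ (i,j)"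
    using A B by (simp add: a_def)
qed


lemma lin_left_mult:
  fixes M X :: "complex mat"
  assumes M: "M \<in> carrier_mat N N" and X: "X \<in> carrier_mat N N"
  shows "(a \<cdot>\<^sub>m 1\<^sub>m N + b \<cdot>\<^sub>m M) * X = a \<cdot>\<^sub>m X + b \<cdot>\<^sub>m (M * X)"
proof -
  have "(a \<cdot>\<^sub>m 1\<^sub>m N + b \<cdot>\<^sub>m M) * X = (a \<cdot>\<^sub>m 1\<^sub>m N) * X + (b \<cdot>\<^sub>m M) * X"
    using M X by (intro add_mult_distrib_mat) auto
  also have "(a \<cdot>\<^sub>m 1\<^sub>m N) * X = a \<cdot>\<^sub>m X"
    using X by (simp add: mult_smult_assoc_mat[of _ N N _ N])
  also have "(b \<cdot>\<^sub>m M) * X = b \<cdot>\<^sub>m (M * X)"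
    using M X by (simp add: mult_smult_assoc_mat[of _ N N _ N])
  finally show ?thesis .
qed

lemma lin_right_mult:
  fixes M X :: "complex mat"
  assumes M: "M \<in> carrier_mat N N" and X: "X \<in> carrier_mat N N"
  shows "X * (a \<cdot>\<^sub>m 1\<^sub>m N + b \<cdot>\<^sub>m M) = a \<cdot>\<^sub>m X + b \<cdot>\<^sub>m (X * M)"
proof -
  have "X * (a \<cdot>\<^sub>m 1\<^sub>m N + b \<cdot>\<^sub>m M) = X * (a \<cdot>\<^sub>m 1\<^sub>m N) + X * (b \<cdot>\<^sub>m M)"
    using M X by (intro mult_add_distrib_mat) auto
  also have "X * (a \<cdot>\<^sub>m 1\<^sub>m N) = a \<cdot>\<^sub>m X"
    using X by (simp add: mult_smult_distrib[of _ N N _ N])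
  also have "X * (b \<cdot>\<^sub>m M) = b \<cdot>\<^sub>m (X * M)"
    using M X by (simp add: mult_smult_distrib[of _ N N _ N])
  finally show ?thesis .
qed

lemma lin_mult:
  fixes M :: "complex mat"
  assumes M: "M \<in> carrier_mat N N" and MM: "M * M = c0 \<cdot>\<^sub>m 1\<^sub>m N"
  shows "(a \<cdot>\<^sub>m 1\<^sub>m N + b \<cdot>\<^sub>m M) * (c \<cdot>\<^sub>m 1\<^sub>m N + e \<cdot>\<^sub>m M)
       = (a * c + b * e * c0) \<cdot>\<^sub>m 1\<^sub>m N + (a * e + b * c) \<cdot>\<^sub>m M"
proof -
  have "(a \<cdot>\<^sub>m 1\<^sub>m N + b \<cdot>\<^sub>m M) * (c \<cdot>\<^sub>m 1\<^sub>m N + e \<cdot>\<^sub>m M)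
     = a \<cdot>\<^sub>m (c \<cdot>\<^sub>m 1\<^sub>m N + e \<cdot>\<^sub>m M) + b \<cdot>\<^sub>m (M * (c \<cdot>\<^sub>m 1\<^sub>m N + e \<cdot>\<^sub>m M))"
    using M by (intro lin_left_mult) auto
  also have "M * (c \<cdot>\<^sub>m 1\<^sub>m N + e \<cdot>\<^sub>m M) = c \<cdot>\<^sub>m M + e \<cdot>\<^sub>m (c0 \<cdot>\<^sub>m 1\<^sub>m N)"
    using lin_right_mult[OF M M] MM by simp
  finally show ?thesis using M
    by (intro eq_matI) (auto simp: algebra_simps)
qed

lemma lin_anti:
  fixes M J :: "complex mat"
  assumes M: "M \<in> carrier_mat N N" and J: "J \<in> carrier_mat N N"
    and JM: "J * M = - (M * J)"
  shows "J * (a \<cdot>\<^sub>m 1\<^sub>m N + b \<cdot>\<^sub>m M) = (a \<cdot>\<^sub>m 1\<^sub>m N + (- b) \<cdot>\<^sub>m M) * J"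
  using lin_left_mult[OF M J, of a "-b"] lin_right_mult[OF M J, of a b] JM M J
  by (intro eq_matI) auto



definition Gm :: "nat \<Rightarrow> complex mat \<Rightarrow> real \<Rightarrow> complex mat" where
  "Gm N M t = of_real (cos t) \<cdot>\<^sub>m 1\<^sub>m N + of_real (sin t) \<cdot>\<^sub>m M"

lemma Gm_carrier: "M \<in> carrier_mat N N \<Longrightarrow> Gm N M t \<in> carrier_mat N N"
  by (simp add: Gm_def)

lemma Gm_add:
  assumes M: "M \<in> carrier_mat N N" and MM: "M * M = (-1) \<cdot>\<^sub>m 1\<^sub>m N"
  shows "Gm N M t * Gm N M u = Gm N M (t + u)"
  unfolding Gm_def lin_mult[OF M MM] by (simp add: cos_add sin_add algebra_simps)

lemma Gm_zero:
  assumes M: "M \<in> carrier_mat N N"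
  shows "Gm N M 0 = 1\<^sub>m N"
  using M by (intro eq_matI) (auto simp: Gm_def)

lemma Gm_det:
  assumes M: "M \<in> carrier_mat N N" and MM: "M * M = (-1) \<cdot>\<^sub>m 1\<^sub>m N"
    and J: "J \<in> carrier_mat N N" and JJ: "J * J = 1\<^sub>m N" and JM: "J * M = - (M * J)"
  shows "det (Gm N M t) = 1"
proof -
  have sym: "det (Gm N M u) = det (Gm N M (-u))" for u
  proof -
    have "J * Gm N M u = Gm N M (-u) * J"
      unfolding Gm_def using lin_anti[OF M J JM] by simp
    then have "det (J * Gm N M u) = det (Gm N M (-u) * J)" by simp
    then have "det J * det (Gm N M u) = det J * det (Gm N M (-u))"
      using det_mult[OF J Gm_carrier[OF M]] det_mult[OF Gm_carrier[OF M] J] by (simp add: mult.commute)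
    moreover have "det J * det J = 1" using det_mult[OF J J] JJ by simp
    then have "det J \<noteq> 0" by auto
    ultimately show ?thesis by simp
  qed
  have sq: "det (Gm N M u) ^ 2 = 1" for u
  proof -
    have "det (Gm N M u) * det (Gm N M (-u)) = det (Gm N M u * Gm N M (-u))"
      using det_mult[OF Gm_carrier[OF M] Gm_carrier[OF M]] by simp
    also have "\<dots> = 1" using Gm_add[OF M MM] Gm_zero[OF M] by simp
    finally show ?thesis using sym[of u] by (simp add: power2_eq_square)
  qed
  have "det (Gm N M t) = det (Gm N M (t/2) * Gm N M (t/2))"
    using Gm_add[OF M MM, of "t/2" "t/2"] by simp
  also have "\<dots> = det (Gm N M (t/2)) ^ 2"
    using det_mult[OF Gm_carrier[OF M] Gm_carrier[OF M]] by (simp add: power2_eq_square)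
  finally show ?thesis using sq by simp
qed

lemma Gm_ctrans:
  assumes M: "M \<in> carrier_mat N N" and aH: "\<And>i j. i < N \<Longrightarrow> j < N \<Longrightarrow> cnj (M $$ (j,i)) = - M $$ (i,j)"
  shows "ctrans (Gm N M t) = Gm N M (-t)"
  using M aH by (intro eq_matI) (auto simp: Gm_def ctrans_def)

lemma Gm_SU:
  assumes M: "M \<in> carrier_mat N N" and MM: "M * M = (-1) \<cdot>\<^sub>m 1\<^sub>m N"
    and J: "J \<in> carrier_mat N N" and JJ: "J * J = 1\<^sub>m N" and JM: "J * M = - (M * J)"
    and aH: "\<And>i j. i < N \<Longrightarrow> j < N \<Longrightarrow> cnj (M $$ (j,i)) = - M $$ (i,j)"
  shows "Gm N M t \<in> SU N"
  unfolding SU_def using Gm_carrier[OF M] Gm_det[OF M MM J JJ JM] Gm_ctrans[OF M aH]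
    Gm_add[OF M MM, of "-t" t] Gm_zero[OF M] by simp

lemma pow_M:
  fixes M :: "complex mat"
  assumes M: "M \<in> carrier_mat N N" and MM: "M * M = (-1) \<cdot>\<^sub>m 1\<^sub>m N"
  shows "M ^\<^sub>m k = ((-1) ^ (k div 2)) \<cdot>\<^sub>m (if even k then 1\<^sub>m N else M)"
proof (induction k)
  case 0 then show ?case using M by auto
next
  case (Suc k)
  show ?case
  proof (cases "even k")
    case True
    have "M ^\<^sub>m Suc k = (((-1) ^ (k div 2)) \<cdot>\<^sub>m 1\<^sub>m N) * M" using Suc True by simp
    also have "\<dots> = ((-1) ^ (k div 2)) \<cdot>\<^sub>m (1\<^sub>m N * M)"
      by (rule mult_smult_assoc_mat) (use M in auto)
    finally show ?thesis using True M by simp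
  next
    case False
    have "M ^\<^sub>m Suc k = (((-1) ^ (k div 2)) \<cdot>\<^sub>m M) * M" using Suc False by simp
    also have "\<dots> = ((-1) ^ (k div 2)) \<cdot>\<^sub>m (M * M)"
      by (rule mult_smult_assoc_mat) (use M in auto)
    also have "\<dots> = ((-1) ^ (Suc k div 2)) \<cdot>\<^sub>m 1\<^sub>m N"
      using False MM by (simp add: smult_smult_mat)
    finally show ?thesis using False by simp
  qed
qed

lemma mexp_Gm:
  assumes M: "M \<in> carrier_mat N N" and MM: "M * M = (-1) \<cdot>\<^sub>m 1\<^sub>m N"
  shows "mexp (of_real t \<cdot>\<^sub>m M) = Gm N M t"
proof (rule eq_matI)
  show "dim_row (mexp (of_real t \<cdot>\<^sub>m M)) = dim_row (Gm N M t)"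
    "dim_col (mexp (of_real t \<cdot>\<^sub>m M)) = dim_col (Gm N M t)"
    using M by (auto simp: mexp_def Gm_def)
  fix p q assume "p < dim_row (Gm N M t)" "q < dim_col (Gm N M t)"
  then have pq: "p < N" "q < N" using M by (auto simp: Gm_def)
  have s1: "(\<lambda>k. of_real t ^ k * (M ^\<^sub>m k) $$ (p,q) / fact k) sums (mexp (of_real t \<cdot>\<^sub>m M)) $$ (p,q)"
    by (rule mexp_sums[OF M pq])
  have s2: "(\<lambda>k. of_real (cos_coeff k * t ^ k) * (1\<^sub>m N) $$ (p,q) + of_real (sin_coeff k * t ^ k) * M $$ (p,q))
      sums (of_real (cos t) * (1\<^sub>m N) $$ (p,q) + of_real (sin t) * M $$ (p,q))"
    using cos_converges[of t] sin_converges[of t]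
    by (intro sums_add sums_mult2 sums_of_real) auto
  have eqf: "of_real t ^ k * (M ^\<^sub>m k) $$ (p,q) / fact k
      = of_real (cos_coeff k * t ^ k) * (1\<^sub>m N) $$ (p,q) + of_real (sin_coeff k * t ^ k) * M $$ (p,q)" for k
  proof (cases "even k")
    case True then show ?thesis using pq M by (simp add: pow_M[OF M MM] cos_coeff_def sin_coeff_def)
  next
    case False
    then have "(k - Suc 0) div 2 = k div 2" by (elim oddE) simp
    then show ?thesis using False pq M by (simp add: pow_M[OF M MM] cos_coeff_def sin_coeff_def)
  qed
  have "(mexp (of_real t \<cdot>\<^sub>m M)) $$ (p,q) = of_real (cos t) * (1\<^sub>m N) $$ (p,q) + of_real (sin t) * M $$ (p,q)"
    using sums_unique2[OF s1 s2[folded eqf]] .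
  then show "(mexp (of_real t \<cdot>\<^sub>m M)) $$ (p,q) = Gm N M t $$ (p,q)"
    using pq M by (simp add: Gm_def)
qed



lemma ctrans_mult:
  assumes "A \<in> carrier_mat N N" "B \<in> carrier_mat N N"
  shows "ctrans (A * B) = ctrans B * ctrans A"
  using assms by (intro eq_matI) (auto simp: ctrans_def scalar_prod_def mult.commute)

lemma ctrans_carrier: "A \<in> carrier_mat N N \<Longrightarrow> ctrans A \<in> carrier_mat N N"
  by (simp add: ctrans_def)

lemma SU_mult:
  assumes U: "U \<in> SU N" and V: "V \<in> SU N"
  shows "U * V \<in> SU N"
proof -
  have Uc: "U \<in> carrier_mat N N" and Vc: "V \<in> carrier_mat N N"
    and UU: "ctrans U * U = 1\<^sub>m N" and VV: "ctrans V * V = 1\<^sub>m N"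
    and dU: "det U = 1" and dV: "det V = 1" using U V by (auto simp: SU_def)
  have cU: "ctrans U \<in> carrier_mat N N" and cV: "ctrans V \<in> carrier_mat N N"
    using Uc Vc by (auto simp: ctrans_carrier)
  have "ctrans (U * V) * (U * V) = ctrans V * (ctrans U * U) * V"
    using Uc Vc cU cV by (simp add: ctrans_mult assoc_mult_mat[of _ N N _ N _ N])
  also have "\<dots> = 1\<^sub>m N" using UU VV cV Vc by simp
  finally show ?thesis using Uc Vc dU dV det_mult[OF Uc Vc] by (simp add: SU_def)
qed

lemma conj_lin:
  fixes U Ui X :: "complex mat"
  assumes U: "U \<in> carrier_mat N N" and Ui: "Ui \<in> carrier_mat N N" and X: "X \<in> carrier_mat N N"
    and UUi: "U * Ui = 1\<^sub>m N"
  shows "U * (a \<cdot>\<^sub>m 1\<^sub>m N + b \<cdot>\<^sub>m X) * Ui = a \<cdot>\<^sub>m 1\<^sub>m N + b \<cdot>\<^sub>m (U * X * Ui)"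
proof -
  have "U * (a \<cdot>\<^sub>m 1\<^sub>m N + b \<cdot>\<^sub>m X) = a \<cdot>\<^sub>m U + b \<cdot>\<^sub>m (U * X)"
    by (rule lin_right_mult[OF X U])
  moreover have "(a \<cdot>\<^sub>m U + b \<cdot>\<^sub>m (U * X)) * Ui = (a \<cdot>\<^sub>m U) * Ui + (b \<cdot>\<^sub>m (U * X)) * Ui"
    using U X Ui by (intro add_mult_distrib_mat) auto
  moreover have "(a \<cdot>\<^sub>m U) * Ui = a \<cdot>\<^sub>m (U * Ui)"
    using U Ui by (rule mult_smult_assoc_mat)
  moreover have "(b \<cdot>\<^sub>m (U * X)) * Ui = b \<cdot>\<^sub>m (U * X * Ui)"
    using U X Ui by (intro mult_smult_assoc_mat) auto
  ultimately show ?thesis using UUi by simp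
qed

lemma conj_smult:
  fixes U Ui X :: "complex mat"
  assumes U: "U \<in> carrier_mat N N" and Ui: "Ui \<in> carrier_mat N N" and X: "X \<in> carrier_mat N N"
  shows "U * (c \<cdot>\<^sub>m X) * Ui = c \<cdot>\<^sub>m (U * X * Ui)"
  using U Ui X by (simp add: mult_smult_distrib[of _ N N _ N] mult_smult_assoc_mat[of _ N N _ N])

lemma pauli_like_char:
  fixes N d :: nat
    and \<rho> :: "complex mat \<Rightarrow> complex mat"
    and \<rho>d :: "complex mat \<Rightarrow> complex mat"
    and P Q :: "complex mat"
  assumes rho_carrier: "\<And>U. U \<in> SU N \<Longrightarrow> \<rho> U \<in> carrier_mat d d"
    and rho_hom: "\<And>U V. U \<in> SU N \<Longrightarrow> V \<in> SU N \<Longrightarrow> \<rho> (U * V) = \<rho> U * \<rho> V"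
    and rho_one: "\<rho> (1\<^sub>m N) = 1\<^sub>m d"
    and rhod_carrier: "\<And>X. X \<in> sl N \<Longrightarrow> \<rho>d X \<in> carrier_mat d d"
    and rhod_smult: "\<And>c X. X \<in> sl N \<Longrightarrow> \<rho>d (c \<cdot>\<^sub>m X) = c \<cdot>\<^sub>m \<rho>d X"
    and rhod_exp: "\<And>X. X \<in> su N \<Longrightarrow> \<rho> (mexp X) = mexp (\<rho>d X)"
    and P: "P \<in> carrier_mat N N" and Q: "Q \<in> carrier_mat N N"
    and hP: "\<And>i j. i < N \<Longrightarrow> j < N \<Longrightarrow> cnj (P $$ (j,i)) = P $$ (i,j)"
    and hQ: "\<And>i j. i < N \<Longrightarrow> j < N \<Longrightarrow> cnj (Q $$ (j,i)) = Q $$ (i,j)"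
    and PP: "P * P = 1\<^sub>m N" and QQ: "Q * Q = 1\<^sub>m N" and PQ: "P * Q = - (Q * P)"
    and trP: "mtrace P = 0" and trQ: "mtrace Q = 0"
  shows "char_poly (\<rho>d P) = char_poly (\<rho>d Q)"
proof -
  have slP: "P \<in> sl N" and slQ: "Q \<in> sl N" using P Q trP trQ by (auto simp: sl_def)
  define M0 where "M0 = Q * P"
  have M0: "M0 \<in> carrier_mat N N" using P Q by (simp add: M0_def)
  have PQP: "P * (Q * P) = - Q"
  proof -
    have "P * (Q * P) = (P * Q) * P" using P Q by simp
    also have "\<dots> = - (Q * P * P)" using PQ P Q by simp
    also have "\<dots> = - Q" using P Q PP by simp
    finally show ?thesis .
  qed
  have QPP: "Q * P * P = Q" using P Q PP by simp
  have m1: "- 1\<^sub>m N = (-1 :: complex) \<cdot>\<^sub>m 1\<^sub>m N" by (intro eq_matI) auto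
  have M0M0: "M0 * M0 = (-1) \<cdot>\<^sub>m 1\<^sub>m N"
  proof -
    have "M0 * M0 = Q * (P * (Q * P))" using P Q by (simp add: M0_def assoc_mult_mat[of _ N N _ N _ N])
    also have "\<dots> = - 1\<^sub>m N" using PQP Q QQ by simp
    finally show ?thesis using m1 by simp
  qed
  have PM0: "P * M0 = - (M0 * P)" using PQP QPP by (simp add: M0_def)
  have entPQ: "(P * Q) $$ (i,j) = - (Q * P) $$ (i,j)" if "i < N" "j < N" for i j
    using PQ that P Q by simp
  have aM0: "cnj (M0 $$ (j,i)) = - M0 $$ (i,j)" if "i < N" "j < N" for i j
  proof -
    have "cnj (M0 $$ (j,i)) = (\<Sum>k<N. cnj (Q $$ (j,k)) * cnj (P $$ (k,i)))"
      using that P Q by (simp add: M0_def scalar_prod_def lessThan_atLeast0)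
    also have "\<dots> = (\<Sum>k<N. P $$ (i,k) * Q $$ (k,j))"
      using that hP hQ by (intro sum.cong) auto
    also have "\<dots> = (P * Q) $$ (i,j)"
      using that P Q by (simp add: scalar_prod_def lessThan_atLeast0)
    finally show ?thesis using entPQ[OF that] by (simp add: M0_def)
  qed
  define U where "U = Gm N M0 (pi/4)"
  define Ui where "Ui = Gm N M0 (-(pi/4))"
  have U: "U \<in> carrier_mat N N" and Ui: "Ui \<in> carrier_mat N N"
    using M0 by (auto simp: U_def Ui_def Gm_carrier)
  have USU: "U \<in> SU N" and UiSU: "Ui \<in> SU N"
    unfolding U_def Ui_def using Gm_SU[OF M0 M0M0 P PP PM0 aM0] by auto
  have UUi: "U * Ui = 1\<^sub>m N" and UiU: "Ui * U = 1\<^sub>m N"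
    unfolding U_def Ui_def using Gm_add[OF M0 M0M0] Gm_zero[OF M0] by auto
  have conjPQ: "U * P * Ui = Q"
  proof -
    have "P * Ui = U * P"
      unfolding U_def Ui_def Gm_def using lin_anti[OF M0 P PM0] by simp
    then have "U * P * Ui = U * U * P" using U Ui P by simp
    also have "U * U = Gm N M0 (pi/2)" unfolding U_def using Gm_add[OF M0 M0M0] by simp
    also have "Gm N M0 (pi/2) = M0" using M0 by (intro eq_matI) (auto simp: Gm_def)
    finally show ?thesis using QPP by (simp add: M0_def)
  qed
  define MP where "MP = \<i> \<cdot>\<^sub>m P"
  define MQ where "MQ = \<i> \<cdot>\<^sub>m Q"
  have MP: "MP \<in> carrier_mat N N" and MQ: "MQ \<in> carrier_mat N N" using P Q by (auto simp: MP_def MQ_def)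
  have MPMP: "MP * MP = (-1) \<cdot>\<^sub>m 1\<^sub>m N" and MQMQ: "MQ * MQ = (-1) \<cdot>\<^sub>m 1\<^sub>m N"
    using P Q PP QQ by (auto simp: MP_def MQ_def mult_smult_distrib[of _ N N _ N]
        mult_smult_assoc_mat[of _ N N _ N] smult_smult_mat)
  have QMP: "Q * MP = - (MP * Q)" and PMQ: "P * MQ = - (MQ * P)"
    using P Q PQ entPQ by (auto simp: MP_def MQ_def mult_smult_distrib[of _ N N _ N]
        mult_smult_assoc_mat[of _ N N _ N] intro!: eq_matI)
  have aMP: "cnj (MP $$ (j,i)) = - MP $$ (i,j)" if "i < N" "j < N" for i j
    using hP[OF that] that P by (simp add: MP_def)
  have aMQ: "cnj (MQ $$ (j,i)) = - MQ $$ (i,j)" if "i < N" "j < N" for i j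
    using hQ[OF that] that Q by (simp add: MQ_def)
  define A where "A = \<rho>d P"
  define B where "B = \<rho>d Q"
  have A: "A \<in> carrier_mat d d" and B: "B \<in> carrier_mat d d"
    using rhod_carrier slP slQ by (auto simp: A_def B_def)
  have rhoG: "\<rho> (Gm N (\<i> \<cdot>\<^sub>m R) t) = mexp ((of_real t * \<i>) \<cdot>\<^sub>m \<rho>d R)"
    if R: "R \<in> carrier_mat N N" and slR: "R \<in> sl N" and RR: "(\<i> \<cdot>\<^sub>m R) * (\<i> \<cdot>\<^sub>m R) = (-1) \<cdot>\<^sub>m 1\<^sub>m N"
      and aR: "\<And>i j. i < N \<Longrightarrow> j < N \<Longrightarrow> cnj (R $$ (j,i)) = R $$ (i,j)"
      and trR: "mtrace R = 0" for R t
  proof -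
    have iR: "\<i> \<cdot>\<^sub>m R \<in> carrier_mat N N" using R by simp
    have su: "of_real t \<cdot>\<^sub>m (\<i> \<cdot>\<^sub>m R) \<in> su N"
    proof -
      have "ctrans (of_real t \<cdot>\<^sub>m (\<i> \<cdot>\<^sub>m R)) = - (of_real t \<cdot>\<^sub>m (\<i> \<cdot>\<^sub>m R))"
        using R aR by (intro eq_matI) (auto simp: ctrans_def)
      moreover have "mtrace (of_real t \<cdot>\<^sub>m (\<i> \<cdot>\<^sub>m R)) = 0"
        using R trR by (simp add: mtrace_def sum_distrib_left[symmetric] mult.assoc)
      ultimately show ?thesis using R by (simp add: su_def)
    qed
    have "\<rho> (Gm N (\<i> \<cdot>\<^sub>m R) t) = \<rho> (mexp (of_real t \<cdot>\<^sub>m (\<i> \<cdot>\<^sub>m R)))"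
      using mexp_Gm[OF iR RR] by simp
    also have "\<dots> = mexp (\<rho>d (of_real t \<cdot>\<^sub>m (\<i> \<cdot>\<^sub>m R)))" using rhod_exp[OF su] .
    also have "\<rho>d (of_real t \<cdot>\<^sub>m (\<i> \<cdot>\<^sub>m R)) = (of_real t * \<i>) \<cdot>\<^sub>m \<rho>d R"
      using rhod_smult[OF slR] by (simp add: smult_smult_mat)
    finally show ?thesis .
  qed
  have GP_SU: "Gm N MP t \<in> SU N" for t using Gm_SU[OF MP MPMP Q QQ QMP aMP] .
  have conjG: "U * Gm N MP t * Ui = Gm N MQ t" for t
  proof -
    have "U * Gm N MP t * Ui = of_real (cos t) \<cdot>\<^sub>m 1\<^sub>m N + of_real (sin t) \<cdot>\<^sub>m (U * MP * Ui)"
      unfolding Gm_def using conj_lin[OF U Ui MP UUi] .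
    also have "U * MP * Ui = MQ" unfolding MP_def MQ_def using conj_smult[OF U Ui P] conjPQ by simp
    finally show ?thesis by (simp add: Gm_def)
  qed
  define V where "V = \<rho> U"
  define W where "W = \<rho> Ui"
  have V: "V \<in> carrier_mat d d" and W: "W \<in> carrier_mat d d"
    using rho_carrier USU UiSU by (auto simp: V_def W_def)
  have VW: "V * W = 1\<^sub>m d" and WV: "W * V = 1\<^sub>m d"
    using rho_hom[OF USU UiSU] rho_hom[OF UiSU USU] UUi UiU rho_one by (auto simp: V_def W_def)
  have eq: "V * mexp ((of_real t * \<i>) \<cdot>\<^sub>m A) * W = mexp ((of_real t * \<i>) \<cdot>\<^sub>m B)" for t :: real
  proof -
    have "mexp ((of_real t * \<i>) \<cdot>\<^sub>m A) = \<rho> (Gm N MP t)"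
      unfolding A_def MP_def using rhoG[OF P slP _ hP trP] MPMP by (simp add: MP_def)
    moreover have "mexp ((of_real t * \<i>) \<cdot>\<^sub>m B) = \<rho> (Gm N MQ t)"
      unfolding B_def MQ_def using rhoG[OF Q slQ _ hQ trQ] MQMQ by (simp add: MQ_def)
    moreover have "\<rho> (U * Gm N MP t * Ui) = V * \<rho> (Gm N MP t) * W"
      using rho_hom[OF SU_mult[OF USU GP_SU] UiSU] rho_hom[OF USU GP_SU] by (simp add: V_def W_def)
    ultimately show ?thesis using conjG[of t] by simp
  qed
  have "V * A * W = B" by (rule exp_similar[OF A B V W VW eq])
  then have "similar_mat B A"
    using A B V W VW WV by (intro similar_matI[where n=d and P=V and Q=W]) auto
  then show ?thesis using char_poly_similar[of B A] by (simp add: A_def B_def)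
qed



lemma bit_shift:
  assumes "k < n"
  shows "(j + 2 ^ n) div 2 ^ k mod 2 = j div 2 ^ k mod (2::nat)"
proof -
  have "(2::nat) ^ n = 2 ^ (n - k) * 2 ^ k" using assms by (simp add: power_add[symmetric])
  then have "(j + 2 ^ n) div 2 ^ k = 2 ^ (n - k) + j div 2 ^ k" by simp
  moreover have "even ((2::nat) ^ (n - k))" using assms by simp
  then obtain m where "(2::nat) ^ (n - k) = 2 * m" by (elim evenE)
  ultimately show ?thesis by simp
qed

lemma sum_bits:
  "(\<Sum>j<2^n. \<Prod>k<n. h k (j div 2^k mod 2)) = (\<Prod>k<n. h k 0 + h k (1::nat) :: complex)"
proof (induction n)
  case 0 then show ?case by simp
next
  case (Suc n)
  define F where "F j = (\<Prod>k<n. h k (j div 2^k mod 2))" for j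
  have split: "(\<Sum>j<2^Suc n. g j) = (\<Sum>j<2^n. g j) + (\<Sum>j<2^n. g (j + 2^n))" for g :: "nat \<Rightarrow> complex"
  proof -
    have "(\<Sum>j<2^Suc n. g j) = (\<Sum>j\<in>{0..<2^n}. g j) + (\<Sum>j\<in>{2^n..<2^n+2^n}. g j)"
      by (simp add: lessThan_atLeast0 sum.atLeastLessThan_concat mult_2)
    also have "(\<Sum>j\<in>{2^n..<2^n+2^n}. g j) = (\<Sum>j<2^n. g (j + 2^n))"
      using sum.shift_bounds_nat_ivl[of g 0 "2^n" "2^n"] by (simp add: lessThan_atLeast0)
    finally show ?thesis by (simp add: lessThan_atLeast0)
  qed
  have lo: "(\<Prod>k<Suc n. h k (j div 2^k mod 2)) = F j * h n 0" if "j < 2^n" for j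
    using that by (simp add: F_def)
  have hi: "(\<Prod>k<Suc n. h k ((j + 2^n) div 2^k mod 2)) = F j * h n 1" if "j < 2^n" for j
  proof -
    have "(\<Prod>k<n. h k ((j + 2^n) div 2^k mod 2)) = F j"
      unfolding F_def by (intro prod.cong) (auto simp: bit_shift)
    moreover have "(j + 2^n) div 2^n = 1" using that by (simp add: div_add_self2)
    ultimately show ?thesis by simp
  qed
  have "(\<Sum>j<2^Suc n. \<Prod>k<Suc n. h k (j div 2^k mod 2)) = (\<Sum>j<2^n. F j * h n 0) + (\<Sum>j<2^n. F j * h n 1)"
    unfolding split by (intro arg_cong2[where f="(+)"] sum.cong refl) (simp_all only: lessThan_iff lo hi)
  also have "\<dots> = (\<Sum>j<2^n. F j) * (h n 0 + h n 1)"
    by (simp add: sum_distrib_right[symmetric] distrib_left)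
  finally show ?case using Suc by (simp add: F_def)
qed

lemma bits_eq:
  assumes "i < 2^n" "j < 2^n" "\<forall>k<n. i div 2^k mod 2 = j div 2^k mod (2::nat)"
  shows "i = j"
  using assms
proof (induction n arbitrary: i j)
  case 0 then show ?case by simp
next
  case (Suc n)
  have "i div 2 = j div 2"
  proof (rule Suc.IH)
    show "i div 2 < 2^n" "j div 2 < 2^n" using Suc.prems by auto
    show "\<forall>k<n. i div 2 div 2^k mod 2 = j div 2 div 2^k mod 2"
      using Suc.prems(3) by (auto simp: div_mult2_eq[symmetric] mult.commute[of 2])
  qed
  moreover have "i mod 2 = j mod 2" using Suc.prems(3)[rule_format, of 0] by simp
  ultimately show ?case by (metis div_mod_decomp)
qed

definition sm :: "nat \<Rightarrow> nat \<Rightarrow> nat \<Rightarrow> nat \<Rightarrow> complex" where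
  "sm a b x y = sigma a x 0 * sigma b 0 y + sigma a x 1 * sigma b 1 y"

definition eps :: "nat \<Rightarrow> nat \<Rightarrow> complex" where
  "eps a b = (if a \<noteq> 0 \<and> b \<noteq> 0 \<and> a \<noteq> b then -1 else 1)"

lemma less2: "(x::nat) < 2 \<longleftrightarrow> x = 0 \<or> x = 1" by auto
lemma le3: "(a::nat) \<le> 3 \<longleftrightarrow> a = 0 \<or> a = 1 \<or> a = 2 \<or> a = 3" by auto

lemma sigma_herm: "a \<le> 3 \<Longrightarrow> x < 2 \<Longrightarrow> y < 2 \<Longrightarrow> cnj (sigma a y x) = sigma a x y"
  unfolding le3 less2 by (auto simp: sigma_def)

lemma sm_sq: "a \<le> 3 \<Longrightarrow> x < 2 \<Longrightarrow> y < 2 \<Longrightarrow> sm a a x y = (if x = y then 1 else 0)"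
  unfolding le3 less2 by (auto simp: sm_def sigma_def)

lemma sm_comm: "a \<le> 3 \<Longrightarrow> b \<le> 3 \<Longrightarrow> x < 2 \<Longrightarrow> y < 2 \<Longrightarrow> sm a b x y = eps a b * sm b a x y"
  unfolding le3 less2 by (auto simp: sm_def sigma_def eps_def)

lemma sigma_tr: "a \<noteq> 0 \<Longrightarrow> a \<le> 3 \<Longrightarrow> sigma a 0 0 + sigma a 1 1 = 0"
  unfolding le3 by (auto simp: sigma_def)

lemma pauli_carrier: "pauli_string n s \<in> carrier_mat (2^n) (2^n)"
  by (simp add: pauli_string_def)

lemma pauli_mult:
  "pauli_string n s * pauli_string n t
     = mat (2^n) (2^n) (\<lambda>(i,j). \<Prod>k<n. sm (s k) (t k) (i div 2^k mod 2) (j div 2^k mod 2))"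
proof (rule eq_matI)
  fix i j assume ij: "i < dim_row (mat (2^n) (2^n) (\<lambda>(i,j). \<Prod>k<n. sm (s k) (t k) (i div 2^k mod 2) (j div 2^k mod 2)))"
    "j < dim_col (mat (2^n) (2^n) (\<lambda>(i,j). \<Prod>k<n. sm (s k) (t k) (i div 2^k mod 2) (j div 2^k mod 2)))"
  then have ij': "i < 2^n" "j < 2^n" by auto
  have "(pauli_string n s * pauli_string n t) $$ (i,j)
     = (\<Sum>c<2^n. (\<Prod>k<n. sigma (s k) (i div 2^k mod 2) (c div 2^k mod 2)) * (\<Prod>k<n. sigma (t k) (c div 2^k mod 2) (j div 2^k mod 2)))"
    using ij' by (simp add: pauli_string_def scalar_prod_def lessThan_atLeast0)
  also have "\<dots> = (\<Sum>c<2^n. \<Prod>k<n. sigma (s k) (i div 2^k mod 2) (c div 2^k mod 2) * sigma (t k) (c div 2^k mod 2) (j div 2^k mod 2))"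
    by (simp add: prod.distrib)
  also have "\<dots> = (\<Prod>k<n. sm (s k) (t k) (i div 2^k mod 2) (j div 2^k mod 2))"
    by (subst sum_bits) (simp add: sm_def)
  finally show "(pauli_string n s * pauli_string n t) $$ (i,j) = mat (2^n) (2^n) (\<lambda>(i,j). \<Prod>k<n. sm (s k) (t k) (i div 2^k mod 2) (j div 2^k mod 2)) $$ (i,j)"
    using ij' by simp
qed (auto simp: pauli_string_def)

definition lab_ok :: "nat \<Rightarrow> (nat \<Rightarrow> nat) \<Rightarrow> bool" where
  "lab_ok n s \<longleftrightarrow> (\<forall>k<n. s k \<le> 3)"

lemma pauli_sq:
  assumes "lab_ok n s"
  shows "pauli_string n s * pauli_string n s = 1\<^sub>m (2^n)"
proof -
  have "(\<Prod>k<n. sm (s k) (s k) (i div 2^k mod 2) (j div 2^k mod 2)) = (if i = j then 1 else 0)"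
    if "i < 2^n" "j < 2^n" for i j
  proof -
    have "(\<Prod>k<n. sm (s k) (s k) (i div 2^k mod 2) (j div 2^k mod 2))
        = (\<Prod>k<n. if i div 2^k mod 2 = j div 2^k mod 2 then 1 else 0)"
      using assms by (intro prod.cong) (auto simp: lab_ok_def sm_sq)
    also have "\<dots> = (if i = j then 1 else 0)"
      using bits_eq[OF that] by auto
    finally show ?thesis .
  qed
  then show ?thesis unfolding pauli_mult by (intro eq_matI) auto
qed

lemma pauli_comm:
  assumes "lab_ok n s" "lab_ok n t"
  shows "pauli_string n s * pauli_string n t = (\<Prod>k<n. eps (s k) (t k)) \<cdot>\<^sub>m (pauli_string n t * pauli_string n s)"
proof -
  have e: "(\<Prod>k<n. sm (s k) (t k) (i div 2^k mod 2) (j div 2^k mod 2))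
     = (\<Prod>k<n. eps (s k) (t k)) * (\<Prod>k<n. sm (t k) (s k) (i div 2^k mod 2) (j div 2^k mod 2))" for i j
  proof -
    have "(\<Prod>k<n. sm (s k) (t k) (i div 2^k mod 2) (j div 2^k mod 2))
     = (\<Prod>k<n. eps (s k) (t k) * sm (t k) (s k) (i div 2^k mod 2) (j div 2^k mod 2))"
      by (intro prod.cong refl sm_comm) (use assms in \<open>auto simp: lab_ok_def\<close>)
    then show ?thesis by (simp add: prod.distrib)
  qed
  show ?thesis unfolding pauli_mult by (intro eq_matI) (simp_all only: e index_mat index_smult_mat dim_row_mat dim_col_mat case_prod_conv)
qed

lemma pauli_herm:
  assumes "lab_ok n s" "i < 2^n" "j < 2^n"
  shows "cnj (pauli_string n s $$ (j,i)) = pauli_string n s $$ (i,j)"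
proof -
  have "cnj (pauli_string n s $$ (j,i)) = (\<Prod>k<n. cnj (sigma (s k) (j div 2^k mod 2) (i div 2^k mod 2)))"
    using assms by (simp add: pauli_string_def)
  also have "\<dots> = (\<Prod>k<n. sigma (s k) (i div 2^k mod 2) (j div 2^k mod 2))"
    by (intro prod.cong refl sigma_herm) (use assms in \<open>auto simp: lab_ok_def\<close>)
  finally show ?thesis using assms by (simp add: pauli_string_def)
qed

lemma pauli_trace:
  assumes "nonid_pauli_label n s"
  shows "mtrace (pauli_string n s) = 0"
proof -
  obtain k where k: "k < n" "s k \<noteq> 0" using assms by (auto simp: nonid_pauli_label_def)
  have "mtrace (pauli_string n s) = (\<Sum>j<2^n. \<Prod>k<n. sigma (s k) (j div 2^k mod 2) (j div 2^k mod 2))"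
    by (simp add: mtrace_def pauli_string_def)
  also have "\<dots> = (\<Prod>k<n. sigma (s k) 0 0 + sigma (s k) 1 1)"
    by (rule sum_bits)
  also have "\<dots> = 0"
  proof -
    have z: "sigma (s k) 0 0 + sigma (s k) 1 1 = 0"
      using k assms by (intro sigma_tr) (auto simp: nonid_pauli_label_def)
    show ?thesis by (rule prod_zero) (use z k(1) in auto)
  qed
  finally show ?thesis .
qed

lemma prod_single:
  fixes n k :: nat
  assumes "k < n" "\<And>j. j < n \<Longrightarrow> j \<noteq> k \<Longrightarrow> f j = (1::complex)"
  shows "(\<Prod>j<n. f j) = f k"
proof -
  have "(\<Prod>j<n. f j) = f k * (\<Prod>j\<in>{..<n} - {k}. f j)"
    using assms(1) by (subst prod.remove[of "{..<n}" k]) auto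
  also have "(\<Prod>j\<in>{..<n} - {k}. f j) = 1" using assms(2) by (intro prod.neutral) auto
  finally show ?thesis by simp
qed

lemma exists_anti:
  assumes s: "nonid_pauli_label n s" and t: "nonid_pauli_label n t"
  shows "\<exists>r. nonid_pauli_label n r \<and> (\<Prod>k<n. eps (s k) (r k)) = -1 \<and> (\<Prod>k<n. eps (t k) (r k)) = -1"
proof (cases "\<exists>k<n. s k \<noteq> 0 \<and> t k \<noteq> 0")
  case True
  then obtain k where k: "k < n" "s k \<noteq> 0" "t k \<noteq> 0" by blast
  define c where "c = (if s k \<noteq> 1 \<and> t k \<noteq> 1 then 1 else if s k \<noteq> 2 \<and> t k \<noteq> 2 then 2 else (3::nat))"
  have c: "c \<noteq> 0" "c \<le> 3" "c \<noteq> s k" "c \<noteq> t k" using s t k by (auto simp: c_def nonid_pauli_label_def)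
  define r where "r j = (if j = k then c else 0)" for j
  have "nonid_pauli_label n r" using k c by (auto simp: nonid_pauli_label_def r_def)
  moreover have "(\<Prod>j<n. eps (s j) (r j)) = -1"
    using prod_single[OF k(1), of "\<lambda>j. eps (s j) (r j)"] k c by (auto simp: r_def eps_def)
  moreover have "(\<Prod>j<n. eps (t j) (r j)) = -1"
    using prod_single[OF k(1), of "\<lambda>j. eps (t j) (r j)"] k c by (auto simp: r_def eps_def)
  ultimately show ?thesis by blast
next
  case False
  obtain k0 where k0: "k0 < n" "s k0 \<noteq> 0" using s by (auto simp: nonid_pauli_label_def)
  obtain k1 where k1: "k1 < n" "t k1 \<noteq> 0" using t by (auto simp: nonid_pauli_label_def)
  have tk0: "t k0 = 0" and sk1: "s k1 = 0" using False k0 k1 by auto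
  then have neq: "k0 \<noteq> k1" using k1 by auto
  define c0 where "c0 = (if s k0 \<noteq> 1 then 1 else (2::nat))"
  define c1 where "c1 = (if t k1 \<noteq> 1 then 1 else (2::nat))"
  define r where "r j = (if j = k0 then c0 else if j = k1 then c1 else 0)" for j
  have "nonid_pauli_label n r" using k0 by (auto simp: nonid_pauli_label_def r_def c0_def c1_def)
  moreover have "(\<Prod>j<n. eps (s j) (r j)) = -1"
    using prod_single[OF k0(1), of "\<lambda>j. eps (s j) (r j)"] k0 sk1 neq
    by (auto simp: r_def eps_def c0_def c1_def)
  moreover have "(\<Prod>j<n. eps (t j) (r j)) = -1"
    using prod_single[OF k1(1), of "\<lambda>j. eps (t j) (r j)"] k1 tk0 neq
    by (auto simp: r_def eps_def c0_def c1_def)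
  ultimately show ?thesis by blast
qed


theorem lemma2p2:
  fixes n d :: nat
    and \<rho> :: "complex mat \<Rightarrow> complex mat"
    and \<rho>d :: "complex mat \<Rightarrow> complex mat"
  defines "N \<equiv> 2 ^ n"
  assumes rho_carrier: "\<And>U. U \<in> SU N \<Longrightarrow> \<rho> U \<in> carrier_mat d d"
    and rho_hom: "\<And>U V. U \<in> SU N \<Longrightarrow> V \<in> SU N \<Longrightarrow> \<rho> (U * V) = \<rho> U * \<rho> V"
    and rho_one: "\<rho> (1\<^sub>m N) = 1\<^sub>m d"
    and rhod_carrier: "\<And>X. X \<in> sl N \<Longrightarrow> \<rho>d X \<in> carrier_mat d d"
    and rhod_add: "\<And>X Y. X \<in> sl N \<Longrightarrow> Y \<in> sl N \<Longrightarrow> \<rho>d (X + Y) = \<rho>d X + \<rho>d Y"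
    and rhod_smult: "\<And>c X. X \<in> sl N \<Longrightarrow> \<rho>d (c \<cdot>\<^sub>m X) = c \<cdot>\<^sub>m \<rho>d X"
    and rhod_bracket: "\<And>X Y. X \<in> sl N \<Longrightarrow> Y \<in> sl N \<Longrightarrow>
           \<rho>d (commutator X Y) = commutator (\<rho>d X) (\<rho>d Y)"
    and rhod_exp: "\<And>X. X \<in> su N \<Longrightarrow> \<rho> (mexp X) = mexp (\<rho>d X)"
  shows "(\<forall>s t. nonid_pauli_label n s \<longrightarrow> nonid_pauli_label n t \<longrightarrow>
            char_poly (\<rho>d (pauli_string n s)) = char_poly (\<rho>d (pauli_string n t)))
       \<and> (\<forall>s. nonid_pauli_label n s \<longrightarrow>
            char_poly (\<rho>d (pauli_string n s)) = char_poly (- \<rho>d (pauli_string n s)))"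
proof -
  have okl: "lab_ok n s" if "nonid_pauli_label n s" for s
    using that by (simp add: lab_ok_def nonid_pauli_label_def)
  have Pc: "pauli_string n s \<in> carrier_mat N N" for s by (simp add: N_def pauli_carrier)
  have Ph: "cnj (pauli_string n s $$ (j,i)) = pauli_string n s $$ (i,j)"
    if "nonid_pauli_label n s" "i < N" "j < N" for s i j
    using pauli_herm[OF okl[OF that(1)]] that by (simp add: N_def)
  have Psq: "pauli_string n s * pauli_string n s = 1\<^sub>m N" if "nonid_pauli_label n s" for s
    using pauli_sq[OF okl[OF that]] by (simp add: N_def)
  have anti: "pauli_string n s * pauli_string n r = - (pauli_string n r * pauli_string n s)"
    if "nonid_pauli_label n s" "nonid_pauli_label n r" "(\<Prod>k<n. eps (s k) (r k)) = -1" for s r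
  proof -
    have "pauli_string n s * pauli_string n r = (-1) \<cdot>\<^sub>m (pauli_string n r * pauli_string n s)"
      using pauli_comm[OF okl[OF that(1)] okl[OF that(2)]] that(3) by simp
    also have "\<dots> = - (pauli_string n r * pauli_string n s)"
      using Pc[of r] Pc[of s] by (intro eq_matI) auto
    finally show ?thesis .
  qed
  have PLC: "char_poly (\<rho>d P) = char_poly (\<rho>d Q)"
    if "P \<in> carrier_mat N N" "Q \<in> carrier_mat N N"
      "\<And>i j. i < N \<Longrightarrow> j < N \<Longrightarrow> cnj (P $$ (j,i)) = P $$ (i,j)"
      "\<And>i j. i < N \<Longrightarrow> j < N \<Longrightarrow> cnj (Q $$ (j,i)) = Q $$ (i,j)"
      "P * P = 1\<^sub>m N" "Q * Q = 1\<^sub>m N" "P * Q = - (Q * P)"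
      "mtrace P = 0" "mtrace Q = 0" for P Q
    by (rule pauli_like_char[where \<rho>=\<rho> and \<rho>d=\<rho>d and N=N and d=d])
      (assumption | rule rho_carrier rho_hom rho_one rhod_carrier rhod_smult rhod_exp that)+
  have key: "char_poly (\<rho>d (pauli_string n s)) = char_poly (\<rho>d (pauli_string n r))"
    if s: "nonid_pauli_label n s" and r: "nonid_pauli_label n r" and e: "(\<Prod>k<n. eps (s k) (r k)) = -1" for s r
    by (rule PLC[OF Pc[of s] Pc[of r] Ph[OF s] Ph[OF r] Psq[OF s] Psq[OF r] anti[OF s r e]
          pauli_trace[OF s] pauli_trace[OF r]])
  have part1: "char_poly (\<rho>d (pauli_string n s)) = char_poly (\<rho>d (pauli_string n t))"
    if s: "nonid_pauli_label n s" and t: "nonid_pauli_label n t" for s t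
  proof -
    obtain r where r: "nonid_pauli_label n r" "(\<Prod>k<n. eps (s k) (r k)) = -1" "(\<Prod>k<n. eps (t k) (r k)) = -1"
      using exists_anti[OF s t] by blast
    show ?thesis using key[OF s r(1) r(2)] key[OF t r(1) r(3)] by simp
  qed
  have part2: "char_poly (\<rho>d (pauli_string n s)) = char_poly (- \<rho>d (pauli_string n s))"
    if s: "nonid_pauli_label n s" for s
  proof -
    obtain r where r: "nonid_pauli_label n r" "(\<Prod>k<n. eps (s k) (r k)) = -1"
      using exists_anti[OF s s] by blast
    define P where "P = pauli_string n s"
    define R where "R = pauli_string n r"
    have P: "P \<in> carrier_mat N N" and R: "R \<in> carrier_mat N N" using Pc by (auto simp: P_def R_def)
    have PR: "P * R = - (R * P)" using anti[OF s r(1) r(2)] by (simp add: P_def R_def)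
    have RP: "R * P = - (P * R)" using PR by simp
    have mP: "- P \<in> carrier_mat N N" using P by simp
    have hmP: "cnj ((- P) $$ (j,i)) = (- P) $$ (i,j)" if "i < N" "j < N" for i j
      using Ph[OF s that] that P by (simp add: P_def)
    have mPmP: "(- P) * (- P) = 1\<^sub>m N" using Psq[OF s] P by (simp add: P_def)
    have RmP: "R * (- P) = - ((- P) * R)" using RP P R by simp
    have trmP: "mtrace (- P) = 0"
      using pauli_trace[OF s] P by (simp add: mtrace_def P_def sum_negf)
    have "char_poly (\<rho>d R) = char_poly (\<rho>d (- P))"
      by (rule PLC[OF R mP Ph[OF r(1), folded R_def] hmP Psq[OF r(1), folded R_def] mPmP RmP pauli_trace[OF r(1), folded R_def] trmP])
    moreover have "\<rho>d (- P) = - \<rho>d P"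
    proof -
      have slP: "P \<in> sl N" using P pauli_trace[OF s] by (simp add: sl_def P_def)
      have "- P = (-1) \<cdot>\<^sub>m P" using P by (intro eq_matI) auto
      then have "\<rho>d (- P) = (-1) \<cdot>\<^sub>m \<rho>d P" using rhod_smult[OF slP] by simp
      also have "\<dots> = - \<rho>d P" using rhod_carrier[OF slP] by (intro eq_matI) auto
      finally show ?thesis .
    qed
    ultimately show ?thesis using key[OF s r(1) r(2)] by (simp add: P_def R_def)
  qed
  show ?thesis using part1 part2 by blast
qed

end
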